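(* Let $X$ be a topological space. The following are equivalent: (1) $X$ is nowhere scattered; (2) $X$ has no nonempty, scattered, locally closed subsets; (3) $X$ has no nonempty, locally closed subset that is $T_1$; (4) $X$ has no locally closed subset containing exactly one element.
   Context: A topological space $X$ is nowhere scattered if no closed subset $C\subseteq X$ contains a point that is isolated relative to $C$. A space is scattered if every nonempty closed subset $C$ contains a point isolated relative to $C$. A subset is locally closed if it is relatively open in some closed subset. Subsets carry the subspace topology. *)

theory Defs
  imports "HOL-Analysis.Analysis"
begin

definition isolated_rel :: "'a topology \<Rightarrow> 'a set \<Rightarrow> 'a \<Rightarrow> bool" where
  "isolated_rel X C x \<longleftrightarrow> x \<in> C \<and> openin (subtopology X C) {x}"

definition nowhere_scattered :: "'a topology \<Rightarrow> bool" where
  "nowhere_scattered X \<longleftrightarrow> \<not> (\<exists>C x. closedin X C \<and> isolated_rel X C x)"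

definition scattered_space :: "'a topology \<Rightarrow> bool" where
  "scattered_space X \<longleftrightarrow>
     (\<forall>C. closedin X C \<and> C \<noteq> {} \<longrightarrow> (\<exists>x. isolated_rel X C x))"

definition locally_closedin :: "'a topology \<Rightarrow> 'a set \<Rightarrow> bool" where
  "locally_closedin X S \<longleftrightarrow>
     (\<exists>C. closedin X C \<and> S \<subseteq> C \<and> openin (subtopology X C) S)"

end

theory Submission
  imports Defs
begin

lemma lc_sub: "locally_closedin X S \<Longrightarrow> S \<subseteq> topspace X"
  unfolding locally_closedin_def by (auto dest: closedin_subset)

lemma lc_singleton: "locally_closedin X {x} \<longleftrightarrow> (\<exists>C. closedin X C \<and> isolated_rel X C x)"
  unfolding locally_closedin_def isolated_rel_def by auto

lemma lc_closed:
  assumes "locally_closedin X S" "closedin (subtopology X S) T"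
  shows "locally_closedin X T"
proof -
  obtain C where C: "closedin X C" "S \<subseteq> C" "openin (subtopology X C) S"
    using assms(1) unfolding locally_closedin_def by blast
  then obtain U where U: "openin X U" "S = U \<inter> C" by (auto simp: openin_subtopology)
  obtain D where D: "closedin X D" "T = D \<inter> S" using assms(2) by (auto simp: closedin_subtopology)
  have "closedin X (C \<inter> D)" using C D by auto
  moreover have "T \<subseteq> C \<inter> D" using D C by auto
  moreover have "openin (subtopology X (C \<inter> D)) T"
    unfolding openin_subtopology using U D by blast
  ultimately show ?thesis unfolding locally_closedin_def by blast
qed

lemma lc_open:
  assumes "locally_closedin X S" "openin (subtopology X S) T"
  shows "locally_closedin X T"
proof -
  obtain C where C: "closedin X C" "S \<subseteq> C" "openin (subtopology X C) S"
    using assms(1) unfolding locally_closedin_def by blast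
  then obtain U where U: "openin X U" "S = U \<inter> C" by (auto simp: openin_subtopology)
  obtain V where V: "openin X V" "T = V \<inter> S" using assms(2) by (auto simp: openin_subtopology)
  have "openin X (V \<inter> U)" using U V by auto
  moreover have "T = (V \<inter> U) \<inter> C" using U V by auto
  ultimately have "openin (subtopology X C) T" unfolding openin_subtopology by blast
  moreover have "T \<subseteq> C" using V C by auto
  ultimately show ?thesis using C unfolding locally_closedin_def by blast
qed

lemma ns_iff: "nowhere_scattered X \<longleftrightarrow> \<not> (\<exists>x. locally_closedin X {x})"
  unfolding nowhere_scattered_def lc_singleton by blast

lemma card1: "card S = 1 \<longleftrightarrow> (\<exists>x. S = {x})"
  by (simp add: card_Suc_eq)

lemma single_props:
  assumes "locally_closedin X {x}"
  shows "scattered_space (subtopology X {x})" "t1_space (subtopology X {x})"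
proof -
  have x: "x \<in> topspace X" using lc_sub[OF assms] by auto
  have tp: "topspace (subtopology X {x}) = {x}" using x by auto
  show "t1_space (subtopology X {x})" unfolding t1_space_def tp by auto
  show "scattered_space (subtopology X {x})"
    unfolding scattered_space_def
  proof (intro allI impI)
    fix C assume h: "closedin (subtopology X {x}) C \<and> C \<noteq> {}"
    then have "C \<subseteq> {x}" using closedin_subset tp by metis
    then have Cx: "C = {x}" using h by auto
    have "openin (subtopology (subtopology X {x}) {x}) {x}"
      using openin_topspace[of "subtopology X {x}"] tp by (simp add: subtopology_subtopology)
    then show "\<exists>y. isolated_rel (subtopology X {x}) C y"
      unfolding isolated_rel_def Cx by auto
  qed
qed

lemma scat_imp:
  assumes "S \<noteq> {}" "locally_closedin X S" "scattered_space (subtopology X S)"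
  shows "\<exists>x. locally_closedin X {x}"
proof -
  have tp: "topspace (subtopology X S) = S" using lc_sub[OF assms(2)] by auto
  have "closedin (subtopology X S) S" using closedin_topspace[of "subtopology X S"] tp by simp
  then obtain x where "isolated_rel (subtopology X S) S x"
    using assms(1,3) unfolding scattered_space_def by meson
  then have "openin (subtopology X S) {x}"
    unfolding isolated_rel_def by (simp add: subtopology_subtopology)
  then show ?thesis using lc_open assms(2) by blast
qed

lemma t1_imp:
  assumes "S \<noteq> {}" "locally_closedin X S" "t1_space (subtopology X S)"
  shows "\<exists>x. locally_closedin X {x}"
proof -
  have tp: "topspace (subtopology X S) = S" using lc_sub[OF assms(2)] by auto
  obtain x where x: "x \<in> S" using assms(1) by auto
  have "closedin (subtopology X S) {x}" using closedin_t1_singleton[OF assms(3)] x tp by auto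
  then show ?thesis using lc_closed assms(2) by blast
qed

theorem mainTheorem10:
  fixes X :: "'a topology"
  shows "(nowhere_scattered X
           \<longleftrightarrow> \<not> (\<exists>S. S \<noteq> {} \<and> locally_closedin X S \<and> scattered_space (subtopology X S)))
       \<and> (nowhere_scattered X
           \<longleftrightarrow> \<not> (\<exists>S. S \<noteq> {} \<and> locally_closedin X S \<and> t1_space (subtopology X S)))
       \<and> (nowhere_scattered X
           \<longleftrightarrow> \<not> (\<exists>S. locally_closedin X S \<and> card S = 1))"
proof -
  have A: "(\<exists>x. locally_closedin X {x}) \<longleftrightarrow> (\<exists>S. S \<noteq> {} \<and> locally_closedin X S \<and> scattered_space (subtopology X S))"
  proof
    assume "\<exists>x. locally_closedin X {x}"
    then obtain x where "locally_closedin X {x}" by blast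
    then show "\<exists>S. S \<noteq> {} \<and> locally_closedin X S \<and> scattered_space (subtopology X S)"
      using single_props(1) by (intro exI[of _ "{x}"]) simp
  next
    assume "\<exists>S. S \<noteq> {} \<and> locally_closedin X S \<and> scattered_space (subtopology X S)"
    then obtain S where "S \<noteq> {}" "locally_closedin X S" "scattered_space (subtopology X S)" by blast
    then show "\<exists>x. locally_closedin X {x}" by (rule scat_imp)
  qed
  have B: "(\<exists>x. locally_closedin X {x}) \<longleftrightarrow> (\<exists>S. S \<noteq> {} \<and> locally_closedin X S \<and> t1_space (subtopology X S))"
  proof
    assume "\<exists>x. locally_closedin X {x}"
    then obtain x where "locally_closedin X {x}" by blast
    then show "\<exists>S. S \<noteq> {} \<and> locally_closedin X S \<and> t1_space (subtopology X S)"
      using single_props(2) by (intro exI[of _ "{x}"]) simp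
  next
    assume "\<exists>S. S \<noteq> {} \<and> locally_closedin X S \<and> t1_space (subtopology X S)"
    then obtain S where "S \<noteq> {}" "locally_closedin X S" "t1_space (subtopology X S)" by blast
    then show "\<exists>x. locally_closedin X {x}" by (rule t1_imp)
  qed
  have C: "(\<exists>x. locally_closedin X {x}) \<longleftrightarrow> (\<exists>S. locally_closedin X S \<and> card S = 1)"
    unfolding card1 by (metis insert_not_empty)
  show ?thesis using ns_iff[of X] A B C by (simp only:)
qed

end
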